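(* Let $\gamma_1,\gamma_2>0$ and consider the birth-death chain RDS $(\theta,\varphi)$ on $\mathbb{N}_0$ described in the context. For every $(x_0,y_0)\in\mathbb{N}_0^2$, the two-point motion $(\varphi^n_q(x_0),\varphi^n_q(y_0))_{n\in\mathbb{N}_0}$ reaches the thick diagonal $\mathbb{D}:=\{(x,y)\in\mathbb{N}_0^2: y\in\{x-1,x,x+1\}\}$ in finite time $\mathbb{P}$-almost surely, i.e. $\mathbb{P}\big(\exists n\geq0: (\varphi^n_q(x_0),\varphi^n_q(y_0))\in\mathbb{D}\big)=1$.
   Context: Noise space: $\mathcal{Q}_+=\{q=(q_n)_{n\in\mathbb{N}_0}: q_n\in[0,1]\}$ with the product Borel $\sigma$-algebra and the product measure $\mathbb{P}=\lambda^{\mathbb{N}_0}$, $\lambda$ Lebesgue measure on $[0,1]$; shift $\theta(q_0,q_1,\dots)=(q_1,q_2,\dots)$. For $q\in\mathcal{Q}_+$ define $f_q:\mathbb{N}_0\to\mathbb{N}_0$ by $f_q(x)=x+1$ if $q_0<\frac{\gamma_1}{\gamma_1+\gamma_2x}$ and $f_q(x)=x-1$ otherwise. The cocycle is $\varphi^0_q(x)=x$ and $\varphi^n_q(x)=f_{\theta^{n-1}q}\circ\cdots\circ f_q(x)$ for $n\geq1$. The pair $(\varphi^n_q(x_0),\varphi^n_q(y_0))_n$ with the same $q$ is called the two-point motion. *)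

theory Defs
  imports "HOL-Probability.Probability"
begin

definition noise :: "(nat \<Rightarrow> real) measure" where
  "noise = (\<Pi>\<^sub>M n\<in>(UNIV::nat set). uniform_measure lborel {0..1::real})"

definition theta :: "(nat \<Rightarrow> real) \<Rightarrow> (nat \<Rightarrow> real)" where
  "theta q = (\<lambda>n. q (Suc n))"

text \<open>One step of the birth-death chain (x - 1 is truncated subtraction on nat;
  the only case where this matters, x = 0 and q 0 = 1, is a null event).\<close>
definition bd_step :: "real \<Rightarrow> real \<Rightarrow> (nat \<Rightarrow> real) \<Rightarrow> nat \<Rightarrow> nat" where
  "bd_step \<gamma>1 \<gamma>2 q x = (if q 0 < \<gamma>1 / (\<gamma>1 + \<gamma>2 * real x) then x + 1 else x - 1)"

fun bd_cocycle :: "real \<Rightarrow> real \<Rightarrow> nat \<Rightarrow> (nat \<Rightarrow> real) \<Rightarrow> nat \<Rightarrow> nat" where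
  "bd_cocycle \<gamma>1 \<gamma>2 0 q x = x"
| "bd_cocycle \<gamma>1 \<gamma>2 (Suc n) q x = bd_step \<gamma>1 \<gamma>2 ((theta ^^ n) q) (bd_cocycle \<gamma>1 \<gamma>2 n q x)"

definition thick_diag :: "(nat \<times> nat) set" where
  "thick_diag = {(x, y). int y \<in> {int x - 1, int x, int x + 1}}"

end

theory Submission
  imports Defs
begin


definition U :: "real measure" where "U = uniform_measure lborel {0..1::real}"

lemma probU: "prob_space U"
  unfolding U_def by (rule prob_space_uniform_measure) auto

lemma noise_U: "noise = (\<Pi>\<^sub>M n\<in>(UNIV::nat set). U)"
  unfolding noise_def U_def ..

lemma space_U: "space U = UNIV" unfolding U_def by simp
lemma sets_U: "sets U = sets borel" unfolding U_def by simp

lemma space_noise: "space noise = UNIV"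
  unfolding noise_U by (simp add: space_PiM space_U)

lemma theta_pow: "(theta ^^ n) q = (\<lambda>k. q (k + n))"
  by (induction n arbitrary: q) (auto simp: theta_def)

lemma cocycle_shift:
  "bd_cocycle g1 g2 (Suc n) q x = bd_cocycle g1 g2 n (theta q) (bd_step g1 g2 q x)"
proof (induction n arbitrary: x)
  case 0 then show ?case by simp
next
  case (Suc n)
  have "bd_cocycle g1 g2 (Suc (Suc n)) q x = bd_step g1 g2 ((theta ^^ Suc n) q) (bd_cocycle g1 g2 (Suc n) q x)"
    by simp
  also have "\<dots> = bd_step g1 g2 ((theta ^^ n) (theta q)) (bd_cocycle g1 g2 n (theta q) (bd_step g1 g2 q x))"
    using Suc by (simp add: funpow_swap1)
  finally show ?case by simp
qed

lemma meas_comp: "(\<lambda>q. q k) \<in> borel_measurable noise"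
  unfolding noise_U by (metis measurable_component_singleton UNIV_I sets_U measurable_cong_sets sets_borel)

lemma meas_step: "(\<lambda>q. bd_step g1 g2 ((theta ^^ n) q) i) \<in> measurable noise (count_space UNIV)"
proof -
  have [measurable]: "(\<lambda>q. q n) \<in> borel_measurable noise" by (rule meas_comp)
  have e: "(\<lambda>q. bd_step g1 g2 ((theta ^^ n) q) i) = (\<lambda>q. if q n < g1 / (g1 + g2 * real i) then i + 1 else i - 1)"
    by (simp add: bd_step_def theta_pow)
  show ?thesis unfolding e by measurable
qed

lemma meas_cocycle: "(\<lambda>q. bd_cocycle g1 g2 n q x) \<in> measurable noise (count_space UNIV)"
proof (induction n)
  case 0 then show ?case by simp
next
  case (Suc n)
  show ?case
    by (simp only: bd_cocycle.simps)
       (rule measurable_compose_countable'[where I=UNIV, OF meas_step Suc], auto)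
qed

definition Anh :: "real \<Rightarrow> real \<Rightarrow> nat \<Rightarrow> nat \<Rightarrow> (nat \<Rightarrow> real) set" where
  "Anh g1 g2 x y = {q \<in> space noise. \<forall>n. (bd_cocycle g1 g2 n q x, bd_cocycle g1 g2 n q y) \<notin> thick_diag}"

lemma Anh_sets: "Anh g1 g2 x y \<in> sets noise"
proof -
  have [measurable]: "(\<lambda>q. bd_cocycle g1 g2 n q x) \<in> measurable noise (count_space UNIV)" for n x
    by (rule meas_cocycle)
  show ?thesis unfolding Anh_def by measurable
qed

lemma decomp:
  assumes X: "X \<in> sets noise"
  shows "emeasure noise X = (\<integral>\<^sup>+ s. emeasure noise {\<omega>. case_nat s \<omega> \<in> X} \<partial>U)"
proof -
  interpret U: prob_space U by (rule probU)
  interpret S: sequence_space U by unfold_locales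
  interpret N: prob_space noise unfolding noise_U by (rule prob_space_PiM) (rule probU)
  have cn: "(\<lambda>(s, \<omega>). case_nat s \<omega>) \<in> measurable (U \<Otimes>\<^sub>M noise) noise"
    unfolding noise_U by measurable
  have "emeasure noise X = emeasure (distr (U \<Otimes>\<^sub>M noise) noise (\<lambda>(s, \<omega>). case_nat s \<omega>)) X"
    unfolding noise_U S.PiM_iter ..
  also have "\<dots> = emeasure (U \<Otimes>\<^sub>M noise) ((\<lambda>(s, \<omega>). case_nat s \<omega>) -` X \<inter> space (U \<Otimes>\<^sub>M noise))"
    by (rule emeasure_distr[OF cn X])
  also have "\<dots> = (\<integral>\<^sup>+ s. emeasure noise (Pair s -` ((\<lambda>(s, \<omega>). case_nat s \<omega>) -` X \<inter> space (U \<Otimes>\<^sub>M noise))) \<partial>U)"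
    by (rule N.emeasure_pair_measure_alt) (rule measurable_sets[OF cn X])
  also have "\<dots> = (\<integral>\<^sup>+ s. emeasure noise {\<omega>. case_nat s \<omega> \<in> X} \<partial>U)"
    by (rule nn_integral_cong) (auto simp: space_pair_measure space_noise space_U intro!: arg_cong[where f="emeasure noise"])
  finally show ?thesis .
qed

definition stp :: "real \<Rightarrow> real \<Rightarrow> real \<Rightarrow> nat \<Rightarrow> nat" where
  "stp g1 g2 s x = (if s < g1 / (g1 + g2 * real x) then x + 1 else x - 1)"

lemma Anh_case:
  "{\<omega>. case_nat s \<omega> \<in> Anh g1 g2 x y} =
     (if (x,y) \<in> thick_diag then {} else Anh g1 g2 (stp g1 g2 s x) (stp g1 g2 s y))"
proof -
  have th: "theta (case_nat s \<omega>) = \<omega>" for \<omega> :: "nat \<Rightarrow> real" by (simp add: theta_def)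
  have bs: "bd_step g1 g2 (case_nat s \<omega>) z = stp g1 g2 s z" for \<omega> z
    by (simp add: bd_step_def stp_def)
  have all: "(\<forall>n. P n) \<longleftrightarrow> P 0 \<and> (\<forall>n. P (Suc n))" for P :: "nat \<Rightarrow> bool"
    by (metis not0_implies_Suc)
  show ?thesis
    unfolding Anh_def space_noise
    by (subst all) (auto simp only: cocycle_shift th bs bd_cocycle.simps(1) split: if_splits)
qed

lemma Anh_rec:
  "emeasure noise (Anh g1 g2 x y) = (if (x,y) \<in> thick_diag then 0 else
      (\<integral>\<^sup>+ s. emeasure noise (Anh g1 g2 (stp g1 g2 s x) (stp g1 g2 s y)) \<partial>U))"
  by (subst decomp[OF Anh_sets]) (simp add: Anh_case)

lemma emeasure_U_Ico:
  assumes "0 \<le> a" "a \<le> b" "b \<le> 1"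
  shows "emeasure U {a..<b} = ennreal (b - a)"
proof -
  have "{0..1} \<inter> {a..<b} = {a..<b::real}" using assms by auto
  thus ?thesis unfolding U_def using assms by (simp add: divide_ennreal_def)
qed

lemma emeasure_U_Ici:
  assumes "0 \<le> a" "a \<le> 1"
  shows "emeasure U {a..} = ennreal (1 - a)"
proof -
  have "{0..1} \<inter> {a..} = {a..1::real}" using assms by auto
  thus ?thesis unfolding U_def using assms by (simp add: divide_ennreal_def)
qed

lemma emeasure_U_Iio:
  assumes "0 \<le> a" "a \<le> 1"
  shows "emeasure U {..<a} = ennreal a"
proof -
  have "{0..1} \<inter> {..<a} = {0..<a::real}" using assms by auto
  thus ?thesis unfolding U_def using assms by (simp add: divide_ennreal_def)
qed

lemma G_rec:
  fixes g1 g2 :: real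
  assumes g: "g1 > 0" "g2 > 0" and xy: "x + 2 \<le> y"
  defines "p \<equiv> \<lambda>z::nat. g1 / (g1 + g2 * real z)"
  defines "G \<equiv> \<lambda>a b. measure noise (Anh g1 g2 a b)"
  shows "G x y = p y * G (x+1) (y+1) + (p x - p y) * G (x+1) (y-1) + (1 - p x) * G (x-1) (y-1)"
proof -
  interpret N: prob_space noise unfolding noise_U by (rule prob_space_PiM) (rule probU)
  have G0: "0 \<le> G a b" for a b by (simp add: G_def)
  have E: "emeasure noise (Anh g1 g2 a b) = ennreal (G a b)" for a b
    unfolding G_def by (rule N.emeasure_eq_measure)
  have pp1: "0 < p z" for z unfolding p_def using g by (simp add: add_pos_nonneg)
  have pp2: "p z \<le> 1" for z unfolding p_def using g by (simp add: add_pos_nonneg field_simps)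
  note pp = pp1 pp2
  have pd: "p y < p x"
  proof -
    have "g1 + g2 * real x < g1 + g2 * real y" using g xy by simp
    thus ?thesis unfolding p_def using g
      by (intro divide_strict_left_mono) (auto intro!: mult_pos_pos add_pos_nonneg)
  qed
  have nd: "(x, y) \<notin> thick_diag" unfolding thick_diag_def using xy by auto
  have pw: "ennreal (G (stp g1 g2 s x) (stp g1 g2 s y)) =
      ennreal (G (x+1) (y+1)) * indicator {..<p y} s + ennreal (G (x+1) (y-1)) * indicator {p y..<p x} s
      + ennreal (G (x-1) (y-1)) * indicator {p x..} s" for s
    using pd unfolding stp_def p_def by (auto simp: indicator_def)
  have "ennreal (G x y) = (\<integral>\<^sup>+ s. ennreal (G (stp g1 g2 s x) (stp g1 g2 s y)) \<partial>U)"
    using Anh_rec[of g1 g2 x y] nd by (simp add: E)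
  also have "\<dots> = (\<integral>\<^sup>+ s. ennreal (G (x+1) (y+1)) * indicator {..<p y} s + ennreal (G (x+1) (y-1)) * indicator {p y..<p x} s
      + ennreal (G (x-1) (y-1)) * indicator {p x..} s \<partial>U)"
    by (simp only: pw)
  also have "\<dots> = ennreal (G (x+1) (y+1)) * emeasure U {..<p y} + ennreal (G (x+1) (y-1)) * emeasure U {p y..<p x}
      + ennreal (G (x-1) (y-1)) * emeasure U {p x..}"
  proof -
    have bU: "borel_measurable U = borel_measurable borel"
      by (rule measurable_cong_sets) (simp_all add: sets_U)
    have m: "(\<lambda>s. ennreal c * indicator A s) \<in> borel_measurable U" if "A \<in> sets borel" for c A
      unfolding bU using that by measurable
    show ?thesis
      by (simp add: nn_integral_add m borel_measurable_add nn_integral_cmult_indicator sets_U)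
  qed
  also have "\<dots> = ennreal (G (x+1) (y+1)) * ennreal (p y) + ennreal (G (x+1) (y-1)) * ennreal (p x - p y)
      + ennreal (G (x-1) (y-1)) * ennreal (1 - p x)"
    using pp[of x] pp[of y] pd
    by (simp add: emeasure_U_Ico emeasure_U_Ici emeasure_U_Iio less_imp_le)
  also have "\<dots> = ennreal (p y * G (x+1) (y+1) + (p x - p y) * G (x+1) (y-1) + (1 - p x) * G (x-1) (y-1))"
  proof -
    have w: "0 \<le> p y" "0 \<le> p x - p y" "0 \<le> 1 - p x" using pp[of x] pp[of y] pd by auto
    have m1: "ennreal (G a b) * ennreal w' = ennreal (w' * G a b)" if "0 \<le> w'" for a b w'
      using that G0[of a b] by (simp add: ennreal_mult[symmetric] mult.commute)
    show ?thesis
    proof -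
      have a1: "0 \<le> p y * G (x+1) (y+1)" using w G0 by simp
      have a2: "0 \<le> (p x - p y) * G (x+1) (y-1)" using w G0 by simp
      have a3: "0 \<le> (1 - p x) * G (x-1) (y-1)" using w G0 by simp
      show ?thesis
        by (simp only: m1[OF w(1)] m1[OF w(2)] m1[OF w(3)]
           ennreal_plus[OF add_nonneg_nonneg[OF a1 a2] a3] ennreal_plus[OF a1 a2])
    qed
  qed
  finally show ?thesis
    using pp[of x] pp[of y] pd G0
    by (subst (asm) ennreal_inj) (auto intro!: add_nonneg_nonneg mult_nonneg_nonneg)
qed



lemma descent:
  fixes h :: "nat \<Rightarrow> nat \<Rightarrow> real" and p :: "nat \<Rightarrow> real"
  assumes p0: "p 0 = 1" and ppos: "\<And>x. 0 < p x" and pdec: "\<And>x y. x < y \<Longrightarrow> p y < p x"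
  and hm: "\<And>x y. x \<le> y \<Longrightarrow> h x y \<le> m"
  and hK: "\<And>x y. x+2 \<le> y \<Longrightarrow> B \<le> y \<Longrightarrow>
     h x y \<le> p y * h (x+1) (y+1) + (p x - p y) * h (x+1) (y-1) + (1 - p x) * h (x-1) (y-1)"
  shows "x \<le> y \<Longrightarrow> h x y = m \<Longrightarrow> \<exists>x' y'. x' \<le> y' \<and> h x' y' = m \<and> (y' \<le> x'+1 \<or> y' < B)"
proof (induction y arbitrary: x)
  case 0
  then show ?case by auto
next
  case (Suc y)
  show ?case
  proof (cases "Suc y \<le> x + 1 \<or> Suc y < B")
    case True
    then show ?thesis using Suc.prems by blast
  next
    case False
    hence c: "x + 2 \<le> Suc y" "B \<le> Suc y" by auto
    have K: "m \<le> p (Suc y) * h (x+1) (Suc y+1) + (p x - p (Suc y)) * h (x+1) (Suc y-1) + (1 - p x) * h (x-1) (Suc y-1)"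
      using hK[OF c] Suc.prems by simp
    have h1: "h (x+1) (Suc y+1) \<le> m" by (rule hm) (use c in simp)
    have h2: "h (x+1) (Suc y-1) \<le> m" by (rule hm) (use c in simp)
    have h3: "h (x-1) (Suc y-1) \<le> m" by (rule hm) (use c in simp)
    have w1: "0 \<le> p (Suc y)" using ppos[of "Suc y"] by simp
    have w2: "0 \<le> p x - p (Suc y)" using pdec[of x "Suc y"] c by simp
    have w3: "0 \<le> 1 - p x" using p0 pdec[of 0 x] by (cases x) auto
    have A1: "p (Suc y) * h (x+1) (Suc y+1) \<le> p (Suc y) * m" using mult_left_mono[OF h1 w1] .
    have A2: "(p x - p (Suc y)) * h (x+1) (Suc y-1) \<le> (p x - p (Suc y)) * m" using mult_left_mono[OF h2 w2] .
    have A3: "(1 - p x) * h (x-1) (Suc y-1) \<le> (1 - p x) * m" using mult_left_mono[OF h3 w3] .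
    show ?thesis
    proof (cases x)
      case 0
      have pos: "0 < 1 - p (Suc y)" using pdec[of 0 "Suc y"] p0 by simp
      have "(1 - p (Suc y)) * m \<le> (1 - p (Suc y)) * h 1 y"
        using K A1 A3 0 p0 by (simp add: algebra_simps)
      hence "m \<le> h 1 y" using pos by simp
      hence e: "h 1 y = m" using h2 0 by simp
      have "1 \<le> y" using c 0 by simp
      from Suc.IH[OF this e] show ?thesis .
    next
      case (Suc x')
      have pos: "0 < 1 - p x" using pdec[of 0 x] p0 Suc by simp
      have "(1 - p x) * m \<le> (1 - p x) * h (x-1) y"
        using K A1 A2 by (simp add: algebra_simps)
      hence "m \<le> h (x-1) y" using pos by simp
      hence e: "h (x-1) y = m" using h3 by simp
      have "x - 1 \<le> y" using c by simp
      from Suc.IH[OF this e] show ?thesis .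
    qed
  qed
qed

lemma analytic:
  fixes g :: "nat \<Rightarrow> nat \<Rightarrow> real" and p :: "nat \<Rightarrow> real"
  assumes p0: "p 0 = 1" and ppos: "\<And>x. 0 < p x" and pdec: "\<And>x y. x < y \<Longrightarrow> p y < p x"
  and plim: "\<And>y. M0 \<le> y \<Longrightarrow> 2 * p y \<le> 1"
  and g0: "\<And>x y. 0 \<le> g x y" and g1: "\<And>x y. g x y \<le> 1"
  and gD: "\<And>x y. x \<le> y \<Longrightarrow> y \<le> x+1 \<Longrightarrow> g x y = 0"
  and gK: "\<And>x y. x+2 \<le> y \<Longrightarrow>
     g x y = p y * g (x+1) (y+1) + (p x - p y) * g (x+1) (y-1) + (1 - p x) * g (x-1) (y-1)"
  and xy: "x \<le> y"
  shows "g x y = 0"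
proof -
  define R where "R = {(x,y). x \<le> y \<and> y \<le> M0}"
  have finR: "finite R" unfolding R_def
    by (rule finite_subset[of _ "{0..M0} \<times> {0..M0}"]) auto
  have R00: "(0,0) \<in> R" unfolding R_def by simp
  define c where "c = Max ((\<lambda>(x,y). g x y) ` R)"
  have gc: "g a b \<le> c" if "(a,b) \<in> R" for a b
    unfolding c_def using finR that by (intro Max_ge) force+
  have c0: "0 \<le> c" using gc[of 0 0] R00 gD[of 0 0] by simp
  have epsb: "g a b - e * real b \<le> c" if ab: "a \<le> b" and e: "e > 0" for a b e
  proof -
    define h where "h = (\<lambda>x y. g x y - e * real y)"
    define N where "N = nat \<lceil>1/e\<rceil> + 1"
    have eN: "1 < e * real N"
    proof -
      have "1/e \<le> real (nat \<lceil>1/e\<rceil>)" by linarith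
      hence "1/e < real N" unfolding N_def by simp
      thus ?thesis using e by (simp add: field_simps)
    qed
    define T where "T = {(x,y). x \<le> y \<and> y \<le> N}"
    have finT: "finite T" unfolding T_def
      by (rule finite_subset[of _ "{0..N} \<times> {0..N}"]) auto
    have T00: "(0,0) \<in> T" unfolding T_def by simp
    define m where "m = Max ((\<lambda>(x,y). h x y) ` T)"
    have hT: "h a b \<le> m" if "(a,b) \<in> T" for a b
      unfolding m_def using finT that by (intro Max_ge) force+
    have m0: "0 \<le> m" using hT[of 0 0] T00 gD[of 0 0] unfolding h_def by simp
    have hm: "h a b \<le> m" if "a \<le> b" for a b
    proof (cases "b \<le> N")
      case True thus ?thesis using hT that unfolding T_def by simp
    next
      case False
      hence "e * real N \<le> e * real b" using e by simp
      thus ?thesis using g1[of a b] eN m0 unfolding h_def by linarith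
    qed
    have "m \<in> (\<lambda>(x,y). h x y) ` T" unfolding m_def using finT T00 by (intro Max_in) auto
    then obtain xs ys where s: "(xs,ys) \<in> T" "h xs ys = m" by auto
    have hK: "h x y \<le> p y * h (x+1) (y+1) + (p x - p y) * h (x+1) (y-1) + (1 - p x) * h (x-1) (y-1)"
      if "x+2 \<le> y" "M0 \<le> y" for x y
    proof -
      have ry: "real (y - 1) = real y - 1" using that by simp
      have "p y * h (x+1) (y+1) + (p x - p y) * h (x+1) (y-1) + (1 - p x) * h (x-1) (y-1)
          = g x y - e * (real y + 2 * p y - 1)"
        unfolding h_def gK[OF that(1)] ry by (simp add: algebra_simps)
      also have "\<dots> \<ge> h x y" unfolding h_def using plim[OF that(2)] e by simp
      finally show ?thesis .
    qed
    have "xs \<le> ys" using s(1) unfolding T_def by simp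
    from descent[of p h m M0, OF p0 ppos pdec hm hK this s(2)]
    obtain x' y' where d: "x' \<le> y'" "h x' y' = m" "y' \<le> x'+1 \<or> y' < M0" by blast
    have "m \<le> c"
    proof (cases "y' \<le> x'+1")
      case True
      hence "m = - e * real y'" using d gD[of x' y'] unfolding h_def by simp
      moreover have "0 \<le> e * real y'" using e by simp
      ultimately show ?thesis using c0 by linarith
    next
      case False
      hence "(x', y') \<in> R" using d unfolding R_def by simp
      moreover have "0 \<le> e * real y'" using e by simp
      ultimately show ?thesis using gc[of x' y'] d unfolding h_def by linarith
    qed
    thus ?thesis using hm[OF ab] unfolding h_def by simp
  qed
  have gle: "g a b \<le> c" if ab: "a \<le> b" for a b
  proof (rule ccontr)
    assume "\<not> g a b \<le> c"
    define e where "e = (g a b - c) / (2 * (real b + 1))"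
    have e: "e > 0" using \<open>\<not> g a b \<le> c\<close> unfolding e_def by simp
    have "e * real b \<le> e * (real b + 1)" using e by simp
    also have "\<dots> = (g a b - c) / 2" unfolding e_def by (simp add: field_simps)
    finally show False using epsb[OF ab e] \<open>\<not> g a b \<le> c\<close> by simp
  qed
  have "c \<in> (\<lambda>(x,y). g x y) ` R" unfolding c_def using finR R00 by (intro Max_in) auto
  then obtain xc yc where cs: "(xc,yc) \<in> R" "g xc yc = c" by auto
  have hK0: "g x y \<le> p y * g (x+1) (y+1) + (p x - p y) * g (x+1) (y-1) + (1 - p x) * g (x-1) (y-1)"
    if "x+2 \<le> y" "0 \<le> y" for x y using gK[OF that(1)] by simp
  have "xc \<le> yc" using cs(1) unfolding R_def by simp
  from descent[of p g c 0, OF p0 ppos pdec gle hK0 this cs(2)]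
  obtain x' y' where d: "x' \<le> y'" "g x' y' = c" "y' \<le> x'+1" by auto
  hence "c = 0" using gD by simp
  thus ?thesis using gle[OF xy] g0[of x y] by simp
qed


lemma diag_sym: "((a,b) \<in> thick_diag) = ((b,a) \<in> thick_diag)"
  unfolding thick_diag_def by auto

lemma Anh_sym: "Anh g1 g2 x y = Anh g1 g2 y x"
  unfolding Anh_def using diag_sym by blast

theorem proposition3p3:
  fixes \<gamma>1 \<gamma>2 :: real and x0 y0 :: nat
  assumes "\<gamma>1 > 0" and "\<gamma>2 > 0"
  shows "measure noise
           {q \<in> space noise. \<exists>n. (bd_cocycle \<gamma>1 \<gamma>2 n q x0, bd_cocycle \<gamma>1 \<gamma>2 n q y0) \<in> thick_diag} = 1"
proof -
  interpret N: prob_space noise unfolding noise_U by (rule prob_space_PiM) (rule probU)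
  define p where "p = (\<lambda>z::nat. \<gamma>1 / (\<gamma>1 + \<gamma>2 * real z))"
  define G where "G = (\<lambda>a b. measure noise (Anh \<gamma>1 \<gamma>2 a b))"
  have p0: "p 0 = 1" unfolding p_def using assms by simp
  have ppos: "0 < p z" for z unfolding p_def using assms by (simp add: add_pos_nonneg)
  have pdec: "p b < p a" if "a < b" for a b
  proof -
    have "\<gamma>1 + \<gamma>2 * real a < \<gamma>1 + \<gamma>2 * real b" using assms that by simp
    thus ?thesis unfolding p_def using assms
      by (intro divide_strict_left_mono) (auto intro!: mult_pos_pos add_pos_nonneg)
  qed
  define M0 where "M0 = nat \<lceil>\<gamma>1 / \<gamma>2\<rceil>"
  have plim: "2 * p b \<le> 1" if "M0 \<le> b" for b
  proof -
    have "\<gamma>1 / \<gamma>2 \<le> real b" using that unfolding M0_def by linarith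
    hence "\<gamma>1 \<le> \<gamma>2 * real b" using assms by (simp add: field_simps)
    hence "2 * \<gamma>1 \<le> \<gamma>1 + \<gamma>2 * real b" by simp
    moreover have "0 < \<gamma>1 + \<gamma>2 * real b" using assms by (simp add: add_pos_nonneg)
    ultimately show ?thesis unfolding p_def by (simp add: field_simps)
  qed
  have g0: "0 \<le> G a b" for a b unfolding G_def by simp
  have g1: "G a b \<le> 1" for a b unfolding G_def by simp
  have gD: "G a b = 0" if "a \<le> b" "b \<le> a + 1" for a b
  proof -
    have "(a, b) \<in> thick_diag" using that unfolding thick_diag_def by auto
    hence "Anh \<gamma>1 \<gamma>2 a b = {}" unfolding Anh_def
      by (auto intro!: exI[where x=0])
    thus ?thesis unfolding G_def by simp
  qed
  have gK: "G a b = p b * G (a+1) (b+1) + (p a - p b) * G (a+1) (b-1) + (1 - p a) * G (a-1) (b-1)"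
    if "a + 2 \<le> b" for a b
    using G_rec[OF assms that] unfolding p_def G_def .
  have G00: "G a b = 0" if "a \<le> b" for a b
    using analytic[of p M0 G, OF p0 ppos pdec plim g0 g1 gD gK that] by blast
  have Gz: "G x0 y0 = 0"
  proof (cases "x0 \<le> y0")
    case True thus ?thesis by (rule G00)
  next
    case False
    hence "G y0 x0 = 0" by (intro G00) simp
    thus ?thesis unfolding G_def by (simp add: Anh_sym)
  qed
  have eq: "{q \<in> space noise. \<exists>n. (bd_cocycle \<gamma>1 \<gamma>2 n q x0, bd_cocycle \<gamma>1 \<gamma>2 n q y0) \<in> thick_diag}
      = space noise - Anh \<gamma>1 \<gamma>2 x0 y0"
    unfolding Anh_def by auto
  show ?thesis unfolding eq
    using N.prob_compl[OF Anh_sets[of \<gamma>1 \<gamma>2 x0 y0]] Gz unfolding G_def by simp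
qed

end
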